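(* Let $n\ge 1$ and, for $i=1,\ldots,n$, let $m_i\ge 1$ and $p_i\ge 1$ be integers. Assume: (C1) For every $i$, $k_i:[0,1]\times[0,1]\to[0,+\infty)$ is measurable and continuous in $t$ for almost every $s$, and there is $\Phi_{i0}\in L^1(0,1)$ with $0\le k_i(t,s)\le \Phi_{i0}(s)$ for $t\in[0,1]$ and a.e. $s\in[0,1]$. (C2) For every $i$ and every integer $l$ with $1\le l<m_i$, $\frac{\partial^{l}k_i}{\partial t^{l}}$ is measurable and continuous in $t$ for a.e. $s$, and there is $\Phi_{il}\in L^1(0,1)$ with $\bigl|\frac{\partial^{l}k_i}{\partial t^{l}}(t,s)\bigr|\le\Phi_{il}(s)$ for $t\in[0,1]$ and a.e. $s$. (C3) For every $i$, $\frac{\partial^{m_i}k_i}{\partial t^{m_i}}$ is measurable and continuous in $t$ except possibly at $t=s$, where there may be a jump discontinuity, and there is $\Phi_{im_i}\in L^1(0,1)$ with $\bigl|\frac{\partial^{m_i}k_i}{\partial t^{m_i}}(t,s)\bigr|\le\Phi_{im_i}(s)$ for $t\in[0,1]$ and a.e. $s$. (C4) For every $i$, $f_i:[0,1]\times\prod_{q=1}^{n}\bigl([0,+\infty)\times\mathbb{R}^{m_q}\bigr)\to[0,+\infty)$ is continuous; its arguments are written $(t,x_{10},\ldots,x_{1m_1},\ldots,x_{n0},\ldots,x_{nm_n})$ with $x_{q0}\ge0$. (C5) For every $i$ and $j=1,\ldots,p_i$, $\gamma_{ij}\in C^{m_i}[0,1]$ and $\gamma_{ij}\ge0$ on $[0,1]$.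 (C6) For every $i,j$, $\lambda_i,\eta_{ij}\in[0,+\infty)$. (C7) For every $i$, the spectral radius of $L_iw(t)=\int_0^1k_i(t,s)w(s)\,ds$ on $C[0,1]$ is positive. (C8) For every $i,j$, $h_{ij}:P\to[0,+\infty)$ is continuous and maps bounded sets into bounded sets. Assume further that there exist $\tau_i,\xi_{ij}\in(0,+\infty)$ ($i=1,\ldots,n$, $j=1,\ldots,p_i$) such that $$0\le f_i(t,x_{10},\ldots,x_{1m_1},\ldots,x_{n0},\ldots,x_{nm_n})\le\tau_i\,x_{i0}\ \text{ on } [0,1]\times\prod_{q=1}^n\bigl([0,+\infty)\times\mathbb{R}^{m_q}\bigr),$$ $$h_{ij}[u]\le\xi_{ij}\|u_i\|_\infty\ \text{ for every } u\in P,\ i=1,\ldots,n,\ j=1,\ldots,p_i,$$ $$\max_{i=1,\ldots,n}\Bigl\{\lambda_i\tau_iK_{i0}+\sum_{j=1}^{p_i}\eta_{ij}\xi_{ij}\|\gamma_{ij}\|_\infty\Bigr\}<1.$$ Then the system $$u_i(t)=\lambda_i\int_0^1k_i(t,s)f_i\bigl(s,u_1(s),\ldots,u_1^{(m_1)}(s),\ldots,u_n(s),\ldots,u_n^{(m_n)}(s)\bigr)\,ds+\sum_{j=1}^{p_i}\eta_{ij}\gamma_{ij}(t)h_{ij}[u],\quad t\in[0,1],\ i=1,\ldots,n,$$ with $u=(u_1,\ldots,u_n)$, has at most the zero solution in $P$.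
   Context: $\|w\|_\infty=\max_{t\in[0,1]}|w(t)|$. The cone is $P=\{u\in\prod_{i=1}^nC^{m_i}[0,1]: u_i(t)\ge0 \text{ for all } t\in[0,1],\ i=1,\ldots,n\}$, where $\prod_{i=1}^nC^{m_i}[0,1]$ carries the norm $\|u\|=\max_i\max_{0\le j\le m_i}\|u_i^{(j)}\|_\infty$. $K_{i0}=\sup_{t\in[0,1]}\int_0^1k_i(t,s)\,ds$. *)

theory Defs
  imports "HOL-Analysis.Analysis"
begin

fun dern :: "nat \<Rightarrow> (real \<Rightarrow> real) \<Rightarrow> real \<Rightarrow> real" where
  "dern 0 w = w"
| "dern (Suc j) w = (\<lambda>t. vector_derivative (dern j w) (at t within {0..1}))"

definition Cm :: "nat \<Rightarrow> (real \<Rightarrow> real) \<Rightarrow> bool" where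
  "Cm m w \<longleftrightarrow>
     (\<forall>j<m. \<forall>t\<in>{0..1}. (dern j w has_vector_derivative dern (Suc j) w t) (at t within {0..1}))
     \<and> continuous_on {0..1} (dern m w)"

definition supn :: "(real \<Rightarrow> real) \<Rightarrow> real" where
  "supn w = (SUP t\<in>{0..1}. \<bar>w t\<bar>)"

definition coneP :: "nat \<Rightarrow> (nat \<Rightarrow> nat) \<Rightarrow> (nat \<Rightarrow> real \<Rightarrow> real) set" where
  "coneP n m = {u. \<forall>i<n. Cm (m i) (u i) \<and> (\<forall>t\<in>{0..1}. u i t \<ge> 0)}"

definition normP :: "nat \<Rightarrow> (nat \<Rightarrow> nat) \<Rightarrow> (nat \<Rightarrow> real \<Rightarrow> real) \<Rightarrow> real" where
  "normP n m u = Max ((\<lambda>(i, j). supn (dern j (u i))) ` (SIGMA i:{..<n}. {..m i}))"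

definition K0 :: "(real \<Rightarrow> real \<Rightarrow> real) \<Rightarrow> real" where
  "K0 k = (SUP t\<in>{0..1}. integral\<^sup>L (lebesgue_on {0..1}) (\<lambda>s. k t s))"

definition intop :: "(real \<Rightarrow> real \<Rightarrow> real) \<Rightarrow> (real \<Rightarrow> complex) \<Rightarrow> real \<Rightarrow> complex" where
  "intop k w = (\<lambda>t. integral\<^sup>L (lebesgue_on {0..1}) (\<lambda>s. complex_of_real (k t s) * w s))"

text \<open>Spectrum of L on C([0,1];C): mu such that mu I - L is not bijective on C[0,1]
  (functions identified when they agree on [0,1]).\<close>
definition spectrumC01 :: "(real \<Rightarrow> real \<Rightarrow> real) \<Rightarrow> complex set" where
  "spectrumC01 k = {\<mu>. \<not> (
      (\<forall>w. continuous_on {0..1} w \<longrightarrow> (\<forall>t\<in>{0..1}. \<mu> * w t - intop k w t = 0)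
            \<longrightarrow> (\<forall>t\<in>{0..1}. w t = 0))
    \<and> (\<forall>g. continuous_on {0..1} g \<longrightarrow>
          (\<exists>w. continuous_on {0..1} w \<and> (\<forall>t\<in>{0..1}. \<mu> * w t - intop k w t = g t))))}"

definition spectral_radiusC01 :: "(real \<Rightarrow> real \<Rightarrow> real) \<Rightarrow> real" where
  "spectral_radiusC01 k = Sup (cmod ` spectrumC01 k)"

end

theory Submission
  imports Defs
begin

lemma sections_ae:
  fixes g :: "real \<times> real \<Rightarrow> real"
  assumes "g \<in> borel_measurable lebesgue"
  shows "AE t in lborel. (\<lambda>s. g (t,s)) \<in> borel_measurable lebesgue"
proof -
  obtain g' where g': "g' \<in> borel_measurable lborel" "AE x in lborel. g x = g' x"
    using completion_ex_borel_measurable_real[OF assms] by blast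
  have g'm: "g' \<in> borel_measurable (lborel \<Otimes>\<^sub>M lborel)" using g'(1) by (simp only: lborel_prod)
  have "AE x in lborel \<Otimes>\<^sub>M lborel. g x = g' x" using g'(2) by (simp only: lborel_prod)
  then have "AE t in lborel. AE s in lborel. g (t,s) = g' (t,s)"
    by (rule lborel_pair.AE_pair)
  then show ?thesis
  proof (rule eventually_mono)
    fix t assume ae: "AE s in lborel. g (t,s) = g' (t,s)"
    have "(\<lambda>s. g' (t,s)) \<in> borel_measurable lborel"
      using g'm by measurable
    then have "(\<lambda>s. g' (t,s)) \<in> borel_measurable lebesgue" by (rule measurable_completion)
    moreover have "AE s in lebesgue. g' (t,s) = g (t,s)" using AE_completion[OF ae] by auto
    ultimately show "(\<lambda>s. g (t,s)) \<in> borel_measurable lebesgue" by (rule borel_measurable_AE)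
  qed
qed

lemma cont_of_Cm:
  assumes "Cm m w" "m \<ge> 1" shows "continuous_on {0..1} w"
proof -
  have "\<forall>t\<in>{0..1}. (dern 0 w has_vector_derivative dern (Suc 0) w t) (at t within {0..1})"
    using assms unfolding Cm_def by auto
  then have "\<forall>t\<in>{0..1}. continuous (at t within {0..1}) w"
    using has_vector_derivative_continuous by fastforce
  then show ?thesis using continuous_on_eq_continuous_within by blast
qed

lemma supn_ge:
  assumes "continuous_on {0..1} w" "t \<in> {0..1::real}" shows "\<bar>w t\<bar> \<le> supn w"
proof -
  have "compact ((\<lambda>t. \<bar>w t\<bar>) ` {0..1})"
    by (rule compact_continuous_image) (auto intro: continuous_intros assms)
  then have "bounded ((\<lambda>t. \<bar>w t\<bar>) ` {0..1})" by (rule compact_imp_bounded)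
  then obtain B where B: "\<forall>x\<in>(\<lambda>t. \<bar>w t\<bar>) ` {0..1}. \<bar>x\<bar> \<le> B"
    unfolding bounded_real by blast
  have "bdd_above ((\<lambda>t. \<bar>w t\<bar>) ` {0..1})"
    by (rule bdd_aboveI2[where M=B]) (use B in auto)
  then show ?thesis unfolding supn_def using assms(2) by (rule cSUP_upper2) auto
qed

lemma supn_le:
  assumes "\<forall>t\<in>{0..1::real}. \<bar>w t\<bar> \<le> B" shows "supn w \<le> B"
  unfolding supn_def using assms by (intro cSUP_least) auto


lemma ae_lborel_interval:
  assumes "AE t in lborel. P t" "a < (b::real)"
  shows "\<exists>t\<in>{a<..<b}. P t"
proof (rule ccontr)
  assume "\<not> (\<exists>t\<in>{a<..<b}. P t)"
  then have sub: "{a<..<b} \<subseteq> {x \<in> space lborel. \<not> P x}" by auto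
  from assms(1) obtain N where N: "{x \<in> space lborel. \<not> P x} \<subseteq> N" "emeasure lborel N = 0" "N \<in> sets lborel"
    by (rule AE_E)
  have "emeasure lborel {a<..<b} \<le> emeasure lborel N"
    using sub N by (intro emeasure_mono) auto
  then have "ennreal (b - a) \<le> 0" using N(2) assms(2) by simp
  then show False using assms(2) by simp
qed

theorem theorem2p5:
  fixes n :: nat and m p :: "nat \<Rightarrow> nat"
    and k :: "nat \<Rightarrow> real \<Rightarrow> real \<Rightarrow> real"
    and \<Phi> :: "nat \<Rightarrow> nat \<Rightarrow> real \<Rightarrow> real"
    and f :: "nat \<Rightarrow> real \<Rightarrow> (nat \<Rightarrow> nat \<Rightarrow> real) \<Rightarrow> real"
    and \<gamma> :: "nat \<Rightarrow> nat \<Rightarrow> real \<Rightarrow> real"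
    and lam :: "nat \<Rightarrow> real" and \<eta> :: "nat \<Rightarrow> nat \<Rightarrow> real"
    and h :: "nat \<Rightarrow> nat \<Rightarrow> (nat \<Rightarrow> real \<Rightarrow> real) \<Rightarrow> real"
    and \<tau> :: "nat \<Rightarrow> real" and \<xi> :: "nat \<Rightarrow> nat \<Rightarrow> real"
    and u :: "nat \<Rightarrow> real \<Rightarrow> real"
  assumes n_pos: "n \<ge> 1"
    and m_pos: "\<forall>i<n. m i \<ge> 1"
    and p_pos: "\<forall>i<n. p i \<ge> 1"
    \<comment> \<open>(C1)\<close>
    and C1_meas: "\<forall>i<n. set_borel_measurable lebesgue ({0..1} \<times> {0..1}) (\<lambda>(t, s). k i t s)"
    and C1_nonneg: "\<forall>i<n. \<forall>t\<in>{0..1}. \<forall>s\<in>{0..1}. k i t s \<ge> 0"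
    and C1_int: "\<forall>i<n. integrable (lebesgue_on {0..1}) (\<Phi> i 0)"
    and C1_ae: "\<forall>i<n. AE s in lebesgue_on {0..1}.
                  continuous_on {0..1} (\<lambda>t. k i t s) \<and> (\<forall>t\<in>{0..1}. k i t s \<le> \<Phi> i 0 s)"
    \<comment> \<open>(C2), (C3)\<close>
    and C23_meas: "\<forall>i<n. \<forall>l\<in>{1..m i}.
                  set_borel_measurable lebesgue ({0..1} \<times> {0..1}) (\<lambda>(t, s). dern l (\<lambda>r. k i r s) t)"
    and C23_int: "\<forall>i<n. \<forall>l\<in>{1..m i}. integrable (lebesgue_on {0..1}) (\<Phi> i l)"
    and C23_ae: "\<forall>i<n. AE s in lebesgue_on {0..1}.
        (\<forall>j. j + 1 < m i \<longrightarrow> (\<forall>t\<in>{0..1}.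
            (dern j (\<lambda>r. k i r s) has_vector_derivative dern (Suc j) (\<lambda>r. k i r s) t) (at t within {0..1})))
      \<and> (\<forall>t\<in>{0..1} - {s}.
            (dern (m i - 1) (\<lambda>r. k i r s) has_vector_derivative dern (m i) (\<lambda>r. k i r s) t) (at t within {0..1}))
      \<and> (\<forall>l\<in>{1..<m i}. continuous_on {0..1} (dern l (\<lambda>r. k i r s))
            \<and> (\<forall>t\<in>{0..1}. \<bar>dern l (\<lambda>r. k i r s) t\<bar> \<le> \<Phi> i l s))
      \<and> continuous_on ({0..1} - {s}) (dern (m i) (\<lambda>r. k i r s))
      \<and> (0 < s \<longrightarrow> (\<exists>a. (dern (m i) (\<lambda>r. k i r s) \<longlongrightarrow> a) (at_left s)))
      \<and> (s < 1 \<longrightarrow> (\<exists>b. (dern (m i) (\<lambda>r. k i r s) \<longlongrightarrow> b) (at_right s)))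
      \<and> (\<forall>t\<in>{0..1} - {s}. \<bar>dern (m i) (\<lambda>r. k i r s) t\<bar> \<le> \<Phi> i (m i) s)"
    \<comment> \<open>(C4)\<close>
    and C4_local: "\<forall>i<n. \<forall>t x y. (\<forall>q<n. \<forall>j\<le>m q. x q j = y q j) \<longrightarrow> f i t x = f i t y"
    and C4_nonneg: "\<forall>i<n. \<forall>t\<in>{0..1}. \<forall>x. (\<forall>q<n. x q 0 \<ge> 0) \<longrightarrow> f i t x \<ge> 0"
    and C4_cont: "\<forall>i<n. \<forall>t\<in>{0..1}. \<forall>x. (\<forall>q<n. x q 0 \<ge> 0) \<longrightarrow>
        (\<forall>\<epsilon>>0. \<exists>\<delta>>0. \<forall>t'\<in>{0..1}. \<forall>x'. (\<forall>q<n. x' q 0 \<ge> 0) \<longrightarrow>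
            \<bar>t' - t\<bar> < \<delta> \<longrightarrow> (\<forall>q<n. \<forall>j\<le>m q. \<bar>x' q j - x q j\<bar> < \<delta>) \<longrightarrow>
            \<bar>f i t' x' - f i t x\<bar> < \<epsilon>)"
    \<comment> \<open>(C5), (C6)\<close>
    and C5: "\<forall>i<n. \<forall>j<p i. Cm (m i) (\<gamma> i j) \<and> (\<forall>t\<in>{0..1}. \<gamma> i j t \<ge> 0)"
    and C6: "\<forall>i<n. lam i \<ge> 0 \<and> (\<forall>j<p i. \<eta> i j \<ge> 0)"
    \<comment> \<open>(C7)\<close>
    and C7: "\<forall>i<n. spectral_radiusC01 (k i) > 0"
    \<comment> \<open>(C8)\<close>
    and C8_nonneg: "\<forall>i<n. \<forall>j<p i. \<forall>v\<in>coneP n m. h i j v \<ge> 0"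
    and C8_cont: "\<forall>i<n. \<forall>j<p i. \<forall>v\<in>coneP n m. \<forall>\<epsilon>>0. \<exists>\<delta>>0. \<forall>w\<in>coneP n m.
        normP n m (\<lambda>q r. w q r - v q r) < \<delta> \<longrightarrow> \<bar>h i j w - h i j v\<bar> < \<epsilon>"
    and C8_bdd: "\<forall>i<n. \<forall>j<p i. \<forall>R. \<exists>B. \<forall>v\<in>coneP n m. normP n m v \<le> R \<longrightarrow> \<bar>h i j v\<bar> \<le> B"
    \<comment> \<open>growth conditions\<close>
    and tau_pos: "\<forall>i<n. \<tau> i > 0"
    and xi_pos: "\<forall>i<n. \<forall>j<p i. \<xi> i j > 0"
    and f_growth: "\<forall>i<n. \<forall>t\<in>{0..1}. \<forall>x. (\<forall>q<n. x q 0 \<ge> 0) \<longrightarrow> f i t x \<le> \<tau> i * x i 0"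
    and h_growth: "\<forall>i<n. \<forall>j<p i. \<forall>v\<in>coneP n m. h i j v \<le> \<xi> i j * supn (v i)"
    and small: "Max ((\<lambda>i. lam i * \<tau> i * K0 (k i)
                   + (\<Sum>j<p i. \<eta> i j * \<xi> i j * supn (\<gamma> i j))) ` {..<n}) < 1"
    \<comment> \<open>u is a solution in P\<close>
    and u_in: "u \<in> coneP n m"
    and u_sol: "\<forall>i<n. \<forall>t\<in>{0..1}. u i t =
        lam i * integral\<^sup>L (lebesgue_on {0..1}) (\<lambda>s. k i t s * f i s (\<lambda>q j. dern j (u q) s))
        + (\<Sum>j<p i. \<eta> i j * \<gamma> i j t * h i j u)"
  shows "\<forall>i<n. \<forall>t\<in>{0..1}. u i t = 0"
proof (intro allI impI ballI)
  fix i :: nat and t0 :: real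
  assume i: "i < n" and t0: "t0 \<in> {0..1}"
  define S where "S = supn (u i)"
  define c where "c = lam i * \<tau> i * K0 (k i) + (\<Sum>j<p i. \<eta> i j * \<xi> i j * supn (\<gamma> i j))"
  have "c \<le> Max ((\<lambda>i. lam i * \<tau> i * K0 (k i)
                   + (\<Sum>j<p i. \<eta> i j * \<xi> i j * supn (\<gamma> i j))) ` {..<n})"
    unfolding c_def using i by (intro Max_ge) auto
  then have c1: "c < 1" using small by linarith
  have uC: "\<forall>q<n. Cm (m q) (u q) \<and> (\<forall>t\<in>{0..1}. u q t \<ge> 0)"
    using u_in unfolding coneP_def by auto
  have ucont: "continuous_on {0..1} (u i)"
    using uC m_pos i by (intro cont_of_Cm) auto
  have uleS: "\<forall>s\<in>{0..1}. u i s \<le> S"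
    using supn_ge[OF ucont] unfolding S_def by (meson abs_ge_self order_trans)
  have S0: "S \<ge> 0" using supn_ge[OF ucont, of 0] unfolding S_def by auto
  have Phi_int: "integrable (lebesgue_on {0..1}) (\<Phi> i 0)" using C1_int i by auto
  have aeK: "AE s in lebesgue_on {0..1}. s \<in> {0..1} \<and> (\<forall>t\<in>{0..1}. k i t s \<le> \<Phi> i 0 s)"
  proof -
    have "AE s in lebesgue_on {0..1}. continuous_on {0..1} (\<lambda>t. k i t s) \<and> (\<forall>t\<in>{0..1}. k i t s \<le> \<Phi> i 0 s)"
      using C1_ae i by auto
    moreover have "AE s in lebesgue_on {0..1}. s \<in> space (lebesgue_on {0..1})" by (rule AE_space)
    ultimately show ?thesis by eventually_elim auto
  qed
  have aePhi: "AE s in lebesgue_on {0..1}. 0 \<le> \<Phi> i 0 s"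
    using aeK
  proof (rule eventually_mono)
    fix s assume "s \<in> {0..1} \<and> (\<forall>t\<in>{0..1}. k i t s \<le> \<Phi> i 0 s)"
    then show "0 \<le> \<Phi> i 0 s" using C1_nonneg i by (meson atLeastAtMost_iff order_trans zero_le_one order_refl)
  qed
  have intK_le: "integral\<^sup>L (lebesgue_on {0..1}) (\<lambda>s. k i t s) \<le> integral\<^sup>L (lebesgue_on {0..1}) (\<Phi> i 0)"
    if t: "t \<in> {0..1}" for t
    using Phi_int _ aePhi
  proof (rule integral_mono_AE')
    show "AE s in lebesgue_on {0..1}. k i t s \<le> \<Phi> i 0 s" using aeK by (rule eventually_mono) (use t in auto)
  qed
  have bdd: "bdd_above ((\<lambda>t. integral\<^sup>L (lebesgue_on {0..1}) (\<lambda>s. k i t s)) ` {0..1})"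
    using intK_le by (intro bdd_aboveI2) auto
  have Kle: "integral\<^sup>L (lebesgue_on {0..1}) (\<lambda>s. k i t s) \<le> K0 (k i)" if "t \<in> {0..1}" for t
    unfolding K0_def using bdd that by (rule cSUP_upper2) auto
  have Gm: "(\<lambda>x. indicator ({0..1}\<times>{0..1}) x *\<^sub>R (case x of (t,s) \<Rightarrow> k i t s)) \<in> borel_measurable lebesgue"
    using C1_meas i unfolding set_borel_measurable_def by auto
  have aeT: "AE t in lborel. (\<lambda>s. indicator ({0..1}\<times>{0..1}) (t,s) *\<^sub>R k i t s) \<in> borel_measurable lebesgue"
    using sections_ae[OF Gm] by simp
  have good: "u i t \<le> c * S"
    if t: "t \<in> {0..1}" and meas: "(\<lambda>s. indicator ({0..1}\<times>{0..1}) (t,s) *\<^sub>R k i t s) \<in> borel_measurable lebesgue"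
    for t
  proof -
    have eq: "(\<lambda>s. indicator ({0..1}\<times>{0..1}) (t,s) *\<^sub>R k i t s) = (\<lambda>s. indicator {0..1} s *\<^sub>R k i t s)"
      using t by (auto simp: indicator_def fun_eq_iff)
    have km: "(\<lambda>s. k i t s) \<in> borel_measurable (lebesgue_on {0..1})"
      using meas unfolding eq by (subst borel_measurable_restrict_space_iff) auto
    have kint: "integrable (lebesgue_on {0..1}) (\<lambda>s. k i t s)"
    proof (rule Bochner_Integration.integrable_bound[OF Phi_int km])
      show "AE s in lebesgue_on {0..1}. norm (k i t s) \<le> norm (\<Phi> i 0 s)"
        using aeK
      proof (rule eventually_mono)
        fix s assume s: "s \<in> {0..1} \<and> (\<forall>t\<in>{0..1}. k i t s \<le> \<Phi> i 0 s)"
        then have "0 \<le> k i t s" "k i t s \<le> \<Phi> i 0 s" using C1_nonneg i t by auto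
        then show "norm (k i t s) \<le> norm (\<Phi> i 0 s)" by simp
      qed
    qed
    have Fle: "k i t s * f i s (\<lambda>q j. dern j (u q) s) \<le> \<tau> i * S * k i t s" if s: "s \<in> {0..1}" for s
    proof -
      have "\<forall>q<n. (\<lambda>q j. dern j (u q) s) q 0 \<ge> 0" using uC s by auto
      then have "f i s (\<lambda>q j. dern j (u q) s) \<le> \<tau> i * (\<lambda>q j. dern j (u q) s) i 0"
        using \<open>\<forall>q<n. (\<lambda>q j. dern j (u q) s) q 0 \<ge> 0\<close> by (intro f_growth[rule_format, OF i s]) auto
      then have "f i s (\<lambda>q j. dern j (u q) s) \<le> \<tau> i * u i s" by simp
      also have "\<dots> \<le> \<tau> i * S" using uleS s tau_pos i by (simp add: mult_left_mono)
      finally have "f i s (\<lambda>q j. dern j (u q) s) \<le> \<tau> i * S" .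
      moreover have "0 \<le> k i t s" using C1_nonneg i t s by auto
      ultimately show ?thesis by (metis mult.commute mult_left_mono)
    qed
    have TS0: "0 \<le> \<tau> i * S" using tau_pos i S0 by (simp add: less_imp_le)
    have "integral\<^sup>L (lebesgue_on {0..1}) (\<lambda>s. k i t s * f i s (\<lambda>q j. dern j (u q) s))
          \<le> integral\<^sup>L (lebesgue_on {0..1}) (\<lambda>s. \<tau> i * S * k i t s)"
    proof (rule integral_mono')
      show "integrable (lebesgue_on {0..1}) (\<lambda>s. \<tau> i * S * k i t s)" using kint by simp
      show "k i t s * f i s (\<lambda>q j. dern j (u q) s) \<le> \<tau> i * S * k i t s"
        if "s \<in> space (lebesgue_on {0..1})" for s using Fle that by simp
      show "0 \<le> \<tau> i * S * k i t s" if "s \<in> space (lebesgue_on {0..1})" for s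
        using that TS0 C1_nonneg i t by simp
    qed
    also have "\<dots> = \<tau> i * S * integral\<^sup>L (lebesgue_on {0..1}) (\<lambda>s. k i t s)" by simp
    also have "\<dots> \<le> \<tau> i * S * K0 (k i)" using Kle[OF t] TS0 by (rule mult_left_mono)
    finally have I1: "integral\<^sup>L (lebesgue_on {0..1}) (\<lambda>s. k i t s * f i s (\<lambda>q j. dern j (u q) s))
          \<le> \<tau> i * S * K0 (k i)" .
    have lam0: "lam i \<ge> 0" using C6 i by auto
    have I1': "lam i * integral\<^sup>L (lebesgue_on {0..1}) (\<lambda>s. k i t s * f i s (\<lambda>q j. dern j (u q) s))
          \<le> lam i * \<tau> i * K0 (k i) * S"
      using mult_left_mono[OF I1 lam0] by (simp add: ac_simps)
    have I2: "(\<Sum>j<p i. \<eta> i j * \<gamma> i j t * h i j u) \<le> (\<Sum>j<p i. \<eta> i j * \<xi> i j * supn (\<gamma> i j)) * S"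
      unfolding sum_distrib_right
    proof (rule sum_mono)
      fix j assume j: "j \<in> {..<p i}"
      have g: "Cm (m i) (\<gamma> i j)" "\<forall>t\<in>{0..1}. \<gamma> i j t \<ge> 0" using C5 i j by auto
      have gc: "continuous_on {0..1} (\<gamma> i j)" using g(1) m_pos i by (intro cont_of_Cm) auto
      have g1: "\<gamma> i j t \<le> supn (\<gamma> i j)" using supn_ge[OF gc t] by simp
      have g0: "0 \<le> \<gamma> i j t" using g(2) t by auto
      have h0: "0 \<le> h i j u" using C8_nonneg i j u_in by auto
      have h1: "h i j u \<le> \<xi> i j * S" using h_growth i j u_in unfolding S_def by auto
      have e0: "0 \<le> \<eta> i j" using C6 i j by auto
      have "\<gamma> i j t * h i j u \<le> supn (\<gamma> i j) * (\<xi> i j * S)"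
        using g1 h1 g0 h0 by (intro mult_mono) auto
      then have "\<eta> i j * (\<gamma> i j t * h i j u) \<le> \<eta> i j * (supn (\<gamma> i j) * (\<xi> i j * S))"
        using e0 by (rule mult_left_mono)
      then show "\<eta> i j * \<gamma> i j t * h i j u \<le> \<eta> i j * \<xi> i j * supn (\<gamma> i j) * S"
        by (simp add: ac_simps)
    qed
    have "u i t = lam i * integral\<^sup>L (lebesgue_on {0..1}) (\<lambda>s. k i t s * f i s (\<lambda>q j. dern j (u q) s))
        + (\<Sum>j<p i. \<eta> i j * \<gamma> i j t * h i j u)" using u_sol i t by auto
    also have "\<dots> \<le> c * S" using I1' I2 unfolding c_def by (simp add: distrib_right)
    finally show ?thesis .
  qed
  have aeU: "AE t in lborel. t \<in> {0..1} \<longrightarrow> u i t \<le> c * S"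
    using aeT by (rule eventually_mono) (use good in auto)
  have allU: "\<forall>t\<in>{0..1}. u i t \<le> c * S"
  proof (rule ccontr)
    assume "\<not> (\<forall>t\<in>{0..1}. u i t \<le> c * S)"
    then obtain t1 where t1: "t1 \<in> {0..1}" "u i t1 > c * S" by auto
    obtain d where d: "d > 0" "\<forall>t\<in>{0..1}. dist t t1 < d \<longrightarrow> dist (u i t) (u i t1) < u i t1 - c * S"
    proof -
      have "\<forall>e>0. \<exists>d>0. \<forall>x'\<in>{0..1}. dist x' t1 < d \<longrightarrow> dist (u i x') (u i t1) < e"
        using ucont t1(1) unfolding continuous_on_iff by simp
      moreover have "u i t1 - c * S > 0" using t1(2) by simp
      ultimately show ?thesis using that by blast
    qed
    have bad: "u i t > c * S" if "t \<in> {0..1}" "\<bar>t - t1\<bar> < d" for t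
      using d(2) that by (force simp: dist_real_def)
    obtain a b where ab: "a < b" "{a<..<b} \<subseteq> {0..1}" "\<forall>t\<in>{a<..<b}. \<bar>t - t1\<bar> < d"
    proof (cases "t1 < 1")
      case True
      show ?thesis
        by (rule that[of t1 "min (t1+d) 1"]) (use True d t1 in auto)
    next
      case False
      then have "t1 = 1" using t1 by auto
      show ?thesis
        by (rule that[of "max (1-d) 0" 1]) (use \<open>t1 = 1\<close> d in auto)
    qed
    obtain t where "t \<in> {a<..<b}" "t \<in> {0..1} \<longrightarrow> u i t \<le> c * S"
      using ae_lborel_interval[OF aeU ab(1)] by blast
    then show False using ab bad by force
  qed
  have "S \<le> c * S"
    unfolding S_def using allU uC i by (intro supn_le) (auto simp: S_def)
  then have "S = 0" using c1 S0
    by (metis mult_strict_right_mono mult_1 not_le order.not_eq_order_implies_strict)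
  then show "u i t0 = 0" using uleS uC i t0 by force
qed

end
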